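(* Let $X$ be a smooth Minkowski plane and $A\subset X$ finite with $|A|$ even. If $\mathrm{FT}(A)$ intersects the boundary of $\operatorname{conv}A$, then $A$ is a double cluster or a pseudo double cluster.
   Context: A Minkowski plane is a two-dimensional real normed space $(X,\|\cdot\|)$ with unit ball $B$; it is smooth if every boundary point of $B$ has a unique supporting line. A proper exposed face of $B$ is the intersection of $B$ with a supporting line. For finite $A$, $\mathrm{FT}(A)$ is the set of minimizers of $\mathbf{x}\mapsto\sum_{\mathbf{a}\in A}\|\mathbf{x}-\mathbf{a}\|$ (Fermat-Torricelli points). A set $C=\{\mathbf{x}_1,\dots,\mathbf{x}_m,\mathbf{y}_1,\dots,\mathbf{y}_m\}$ is a double cluster with pairs $\mathbf{x}_i,\mathbf{y}_i$ if all $\frac{\mathbf{x}_i-\mathbf{y}_i}{\|\mathbf{x}_i-\mathbf{y}_i\|}$ lie in the same proper exposed face of $B$. A pseudo double cluster is the union of a double cluster $C$, a Fermat-Torricelli point of $C$ (its centre), and one further arbitrary point. *)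

theory Defs
  imports "HOL-Analysis.Analysis"
begin

type_synonym pt = "real^2"

definition is_norm :: "(pt \<Rightarrow> real) \<Rightarrow> bool" where
  "is_norm N \<longleftrightarrow> (\<forall>x. N x = 0 \<longleftrightarrow> x = 0) \<and>
     (\<forall>c x. N (c *\<^sub>R x) = \<bar>c\<bar> * N x) \<and>
     (\<forall>x y. N (x + y) \<le> N x + N y)"

definition unit_ball :: "(pt \<Rightarrow> real) \<Rightarrow> pt set" where
  "unit_ball N = {x. N x \<le> 1}"

definition supporting_line :: "(pt \<Rightarrow> real) \<Rightarrow> pt set \<Rightarrow> bool" where
  "supporting_line N L \<longleftrightarrow> (\<exists>(f::pt \<Rightarrow> real) c. linear f \<and> f \<noteq> (\<lambda>_. 0) \<and> L = {y. f y = c} \<and>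
      L \<inter> unit_ball N \<noteq> {} \<and> (\<forall>y \<in> unit_ball N. f y \<le> c))"

definition smooth_norm :: "(pt \<Rightarrow> real) \<Rightarrow> bool" where
  "smooth_norm N \<longleftrightarrow> (\<forall>x. N x = 1 \<longrightarrow> (\<exists>!L. supporting_line N L \<and> x \<in> L))"

definition proper_exposed_face :: "(pt \<Rightarrow> real) \<Rightarrow> pt set \<Rightarrow> bool" where
  "proper_exposed_face N F \<longleftrightarrow> (\<exists>L. supporting_line N L \<and> F = unit_ball N \<inter> L)"

definition FT :: "(pt \<Rightarrow> real) \<Rightarrow> pt set \<Rightarrow> pt set" where
  "FT N A = {x. \<forall>z. (\<Sum>a\<in>A. N (x - a)) \<le> (\<Sum>a\<in>A. N (z - a))}"

definition double_cluster :: "(pt \<Rightarrow> real) \<Rightarrow> pt set \<Rightarrow> bool" where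
  "double_cluster N C \<longleftrightarrow> (\<exists>m x y. C = x ` {..<m} \<union> y ` {..<m} \<and> card C = 2 * m \<and>
      (\<exists>F. proper_exposed_face N F \<and>
         (\<forall>i<m. (1 / N (x i - y i)) *\<^sub>R (x i - y i) \<in> F)))"

definition pseudo_double_cluster :: "(pt \<Rightarrow> real) \<Rightarrow> pt set \<Rightarrow> bool" where
  "pseudo_double_cluster N A \<longleftrightarrow> (\<exists>C c p. double_cluster N C \<and> c \<in> FT N C \<and> A = C \<union> {c, p})"

end

theory Submission
  imports Defs
begin


definition nf :: "(pt \<Rightarrow> real) \<Rightarrow> pt \<Rightarrow> pt \<Rightarrow> bool" where
  "nf N u g \<longleftrightarrow> (\<forall>y. g \<bullet> y \<le> N y) \<and> g \<bullet> u = N u"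

context fixes N assumes nN: "is_norm N"
begin

lemma N0[simp]: "N 0 = 0" using nN unfolding is_norm_def by auto
lemma Neq0[simp]: "N x = 0 \<longleftrightarrow> x = 0" using nN unfolding is_norm_def by auto
lemma Nscale: "N (c *\<^sub>R x) = \<bar>c\<bar> * N x" using nN unfolding is_norm_def by auto
lemma Ntri: "N (x + y) \<le> N x + N y" using nN unfolding is_norm_def by auto
lemma Nneg[simp]: "N (- x) = N x" using Nscale[of "-1" x] by simp
lemma Nge0: "N x \<ge> 0"
proof -
  have "N (x + - x) \<le> N x + N (-x)" by (rule Ntri)
  then show ?thesis by simp
qed
lemma Npos: "x \<noteq> 0 \<Longrightarrow> N x > 0" using Nge0[of x] Neq0[of x] by linarith
lemma Ndiff: "N (x - y) \<le> N x + N y" using Ntri[of x "-y"] by simp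
lemma Nrev: "N (x - y) = N (y - x)" using Nneg[of "x - y"] by simp
lemma Nabs: "\<bar>N x - N y\<bar> \<le> N (x - y)"
proof -
  have "N x \<le> N (x - y) + N y" using Ntri[of "x - y" y] by simp
  moreover have "N y \<le> N (y - x) + N x" using Ntri[of "y - x" x] by simp
  ultimately show ?thesis using Nrev[of x y] by linarith
qed

definition CN where "CN = N (axis 1 1) + N (axis 2 1)"

lemma Nbound: "N x \<le> CN * norm x"
proof -
  have x: "x = (x$1) *\<^sub>R axis 1 1 + (x$2) *\<^sub>R axis 2 (1::real)"
    by (simp add: vec_eq_iff forall_2 axis_def)
  have "N x \<le> N ((x$1) *\<^sub>R axis 1 1) + N ((x$2) *\<^sub>R axis 2 (1::real))"
    by (subst x) (rule Ntri)
  also have "\<dots> = \<bar>x$1\<bar> * N (axis 1 1) + \<bar>x$2\<bar> * N (axis 2 1)" by (simp add: Nscale)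
  also have "\<dots> \<le> norm x * N (axis 1 1) + norm x * N (axis 2 1)"
    by (intro add_mono mult_right_mono) (auto simp: Nge0 component_le_norm_cart)
  finally show ?thesis by (simp add: CN_def algebra_simps)
qed

lemma CN_ge0: "CN \<ge> 0" by (simp add: CN_def Nge0 add_nonneg_nonneg)

lemma N_tendsto: "(f \<longlongrightarrow> l) F \<Longrightarrow> ((\<lambda>n. N (f n)) \<longlongrightarrow> N l) F"
proof -
  assume f: "(f \<longlongrightarrow> l) F"
  have f0: "((\<lambda>n. f n - l) \<longlongrightarrow> 0) F" using f by (simp add: LIM_zero)
  have "((\<lambda>n. N (f n) - N l) \<longlongrightarrow> 0) F"
  proof (rule tendsto_0_le[OF f0, where K=CN])
    show "\<forall>\<^sub>F x in F. norm (N (f x) - N l) \<le> norm (f x - l) * CN"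
      by (intro always_eventually allI) (simp add: mult.commute order_trans[OF Nabs Nbound])
  qed
  then show ?thesis by (simp add: LIM_zero_iff)
qed

lemma Nconv: "0 \<le> t \<Longrightarrow> t \<le> 1 \<Longrightarrow> N (t *\<^sub>R x + (1 - t) *\<^sub>R y) \<le> t * N x + (1 - t) * N y"
  using Ntri[of "t *\<^sub>R x" "(1 - t) *\<^sub>R y"] by (simp add: Nscale)

lemma nf_exists: "\<exists>g. nf N u g"
proof (cases "u = 0")
  case True
  then show ?thesis by (rule_tac x=0 in exI) (simp add: nf_def Nge0)
next
  case False
  let ?O = "{y. N y < N u}"
  have cO: "convex ?O"
    unfolding convex_def
  proof (intro allI impI ballI, clarsimp)
    fix x y :: pt and t s :: real
    assume "N x < N u" "N y < N u" "0 \<le> t" "0 \<le> s" "t + s = 1"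
    then have "N (t *\<^sub>R x + s *\<^sub>R y) \<le> t * N x + s * N y" using Ntri[of "t *\<^sub>R x" "s *\<^sub>R y"] by (simp add: Nscale)
    also have "\<dots> < N u"
    proof -
      have "t * N x \<le> t * N u" "s * N y \<le> s * N u" using \<open>N x < N u\<close> \<open>N y < N u\<close> \<open>0\<le>t\<close> \<open>0\<le>s\<close>
        by (auto intro: mult_left_mono)
      moreover have "t * N x < t * N u \<or> s * N y < s * N u" using \<open>t + s = 1\<close> \<open>N x < N u\<close> \<open>N y < N u\<close> \<open>0\<le>t\<close> \<open>0\<le>s\<close>
        by (cases "t > 0") auto
      ultimately have "t * N x + s * N y < t * N u + s * N u" by linarith
      moreover have "t * N u + s * N u = N u" using \<open>t + s = 1\<close> by (metis distrib_right mult_1)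
      ultimately show ?thesis by linarith
    qed
    finally show "N (t *\<^sub>R x + s *\<^sub>R y) < N u" .
  qed
  have Nu: "N u > 0" using False Npos by auto
  obtain a b where a: "a \<noteq> 0" "\<forall>y\<in>?O. a \<bullet> y \<le> b" "\<forall>y\<in>{u}. a \<bullet> y \<ge> b"
    using separating_hyperplane_sets[OF cO convex_singleton, of u] Nu by auto
  have key: "a \<bullet> y * N u \<le> (a \<bullet> u) * N y" for y
  proof (cases "y = 0")
    case True
    then show ?thesis by simp
  next
    case yF: False
    have Ny: "N y > 0" using yF Npos by auto
    have "(N u / N y) * (a \<bullet> y) \<le> a \<bullet> u"
    proof (rule field_le_mult_one_interval)
      fix s :: real assume s: "0 < s" "s < 1"
      have "N ((s * (N u / N y)) *\<^sub>R y) = s * N u" using s Ny Nu yF False by (simp add: Nscale abs_mult)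
      also have "\<dots> < N u" using s Nu by simp
      finally have "a \<bullet> ((s * (N u / N y)) *\<^sub>R y) \<le> b" using a(2) by auto
      then show "s * (N u / N y * (a \<bullet> y)) \<le> a \<bullet> u" using a(3) by (simp add: mult.assoc)
    qed
    then show ?thesis using Ny by (simp add: field_simps)
  qed
  have au: "a \<bullet> u > 0"
  proof (rule ccontr)
    assume "\<not> a \<bullet> u > 0"
    then have "(a \<bullet> u) * N a \<le> 0" using Nge0[of a] by (simp add: mult_nonpos_nonneg)
    then have "a \<bullet> a * N u \<le> 0" using key[of a] by linarith
    then have "a \<bullet> a \<le> 0" using Nu by (simp add: mult_le_0_iff)
    then show False using a(1) by (meson inner_gt_zero_iff not_le)
  qed
  show ?thesis
  proof (rule exI[of _ "(N u / (a \<bullet> u)) *\<^sub>R a"], unfold nf_def, intro conjI allI)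
    fix y
    show "(N u / (a \<bullet> u)) *\<^sub>R a \<bullet> y \<le> N y" using key[of y] au Nu by (simp add: field_simps)
  next
    show "(N u / (a \<bullet> u)) *\<^sub>R a \<bullet> u = N u" using au by simp
  qed
qed

lemma nf_abs: "nf N u g \<Longrightarrow> \<bar>g \<bullet> y\<bar> \<le> N y"
proof -
  assume "nf N u g"
  then have "g \<bullet> y \<le> N y" "g \<bullet> (-y) \<le> N (-y)" unfolding nf_def by blast+
  then show ?thesis by (simp add: abs_le_iff)
qed

lemma nf_bound: "nf N u g \<Longrightarrow> norm g \<le> CN"
proof -
  assume "nf N u g"
  then have "g \<bullet> g \<le> CN * norm g" using Nbound[of g] unfolding nf_def by (meson order_trans)
  then have "norm g * norm g \<le> CN * norm g" by (simp add: power2_eq_square[symmetric] power2_norm_eq_inner)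
  then show ?thesis using CN_ge0 by (cases "norm g = 0") (auto simp: mult_le_cancel_right)
qed

lemma nf_scale: "c > 0 \<Longrightarrow> nf N u g \<Longrightarrow> nf N (c *\<^sub>R u) g"
  unfolding nf_def by (simp add: Nscale)

lemma nf_neg: "nf N u g \<Longrightarrow> nf N (-u) (-g)"
proof -
  assume "nf N u g"
  then have "g \<bullet> (-y) \<le> N (-y)" for y unfolding nf_def by blast
  then show ?thesis using \<open>nf N u g\<close> unfolding nf_def by simp
qed

lemma nf_unique:
  assumes sm: "smooth_norm N" and u: "u \<noteq> 0" and g1: "nf N u g1" and g2: "nf N u g2"
  shows "g1 = g2"
proof -
  have Nu: "N u > 0" using u Npos by auto
  define u' where "u' = (1 / N u) *\<^sub>R u"
  have Nu': "N u' = 1" using Nu u by (simp add: u'_def Nscale)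
  have h1: "nf N u' g1" "nf N u' g2" using nf_scale[of "1 / N u"] g1 g2 Nu by (auto simp: u'_def)
  have sl: "supporting_line N {y. g \<bullet> y = 1} \<and> u' \<in> {y. g \<bullet> y = 1}" if "nf N u' g" for g
  proof -
    have gu: "g \<bullet> u' = 1" using that Nu' by (simp add: nf_def)
    show ?thesis unfolding supporting_line_def
    proof (intro conjI exI[of _ "\<lambda>y. g \<bullet> y"] exI[of _ "1::real"])
      show "linear ((\<bullet>) g)" by (simp add: linear_iff inner_add_right)
      show "(\<bullet>) g \<noteq> (\<lambda>_. 0)" using gu by (metis zero_neq_one)
      show "{y. g \<bullet> y = 1} \<inter> unit_ball N \<noteq> {}" using gu Nu' by (auto simp: unit_ball_def)
      show "\<forall>y\<in>unit_ball N. g \<bullet> y \<le> 1" using that by (auto simp: unit_ball_def nf_def intro: order_trans)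
    qed (use gu in auto)
  qed
  from sm Nu' obtain L where "\<forall>L'. supporting_line N L' \<and> u' \<in> L' \<longrightarrow> L' = L"
    unfolding smooth_norm_def by metis
  then have L: "{y. g1 \<bullet> y = 1} = {y. g2 \<bullet> y = 1}" using sl[OF h1(1)] sl[OF h1(2)] by metis
  have gu: "g1 \<bullet> u' = 1" "g2 \<bullet> u' = 1" using h1 Nu' by (auto simp: nf_def)
  have "g2 \<bullet> y = g1 \<bullet> y" for y
  proof -
    define d where "d = y - (g1 \<bullet> y) *\<^sub>R u'"
    have "g1 \<bullet> (u' + d) = 1" using gu by (simp add: d_def inner_diff_right inner_add_right)
    then have "g2 \<bullet> (u' + d) = 1" using L by blast
    then have "g2 \<bullet> d = 0" using gu by (simp add: inner_add_right)
    then show ?thesis using gu by (simp add: d_def inner_diff_right)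
  qed
  then have "(g1 - g2) \<bullet> (g1 - g2) = 0" by (simp add: inner_diff_left)
  then show ?thesis by simp
qed

end


context fixes N assumes nN: "is_norm N" and sm: "smooth_norm N"
begin

lemma deriv_bound:
  assumes u: "u \<noteq> 0" and G0: "nf N u G0" and e: "\<epsilon> > 0"
  shows "eventually (\<lambda>t. \<forall>g. nf N (u + t *\<^sub>R v) g \<longrightarrow> g \<bullet> v \<le> G0 \<bullet> v + \<epsilon>) (at_right (0::real))"
proof (rule ccontr)
  assume "\<not> ?thesis"
  then have "\<forall>b>0. \<exists>t>0. t < b \<and> (\<exists>g. nf N (u + t *\<^sub>R v) g \<and> g \<bullet> v > G0 \<bullet> v + \<epsilon>)"
    unfolding eventually_at_right_field by (auto simp: not_le)
  then have "\<forall>n::nat. \<exists>t>0. t < 1 / Suc n \<and> (\<exists>g. nf N (u + t *\<^sub>R v) g \<and> g \<bullet> v > G0 \<bullet> v + \<epsilon>)"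
    by auto
  then obtain t g where tg: "\<And>n. t n > 0" "\<And>n. t n < 1 / Suc n" "\<And>n. nf N (u + t n *\<^sub>R v) (g n)"
      "\<And>n. g n \<bullet> v > G0 \<bullet> v + \<epsilon>"
    by metis
  have "bounded (range g)"
    unfolding bounded_iff using nf_bound[OF nN tg(3)] by blast
  then obtain G r where r: "strict_mono r" "((g \<circ> r) \<longlongrightarrow> G) sequentially"
    using bounded_imp_convergent_subsequence by blast
  have t0: "t \<longlonglongrightarrow> 0"
  proof (rule tendsto_sandwich[of "\<lambda>_. 0" _ _ "\<lambda>n. 1 / Suc n"])
    show "\<forall>\<^sub>F n in sequentially. 0 \<le> t n" using tg(1) by (simp add: less_imp_le)
    show "\<forall>\<^sub>F n in sequentially. t n \<le> 1 / Suc n" using tg(2) by (simp add: less_imp_le)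
    show "(\<lambda>n. 1 / real (Suc n)) \<longlonglongrightarrow> 0" using LIMSEQ_Suc[OF lim_const_over_n[of 1]] by simp
  qed simp
  have tr: "(t \<circ> r) \<longlonglongrightarrow> 0" using LIMSEQ_subseq_LIMSEQ[OF t0 r(1)] .
  have gr: "(\<lambda>n. g (r n)) \<longlonglongrightarrow> G" using r(2) by (simp add: o_def)
  have trr: "(\<lambda>n. t (r n)) \<longlonglongrightarrow> 0" using tr by (simp add: o_def)
  have le: "G \<bullet> y \<le> N y" for y
  proof (rule tendsto_le[OF trivial_limit_sequentially tendsto_const])
    show "(\<lambda>n. g (r n) \<bullet> y) \<longlonglongrightarrow> G \<bullet> y" by (intro tendsto_intros gr)
    show "\<forall>\<^sub>F n in sequentially. g (r n) \<bullet> y \<le> N y" using tg(3) by (simp add: nf_def)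
  qed
  have lim1: "(\<lambda>n. g (r n) \<bullet> (u + t (r n) *\<^sub>R v)) \<longlonglongrightarrow> G \<bullet> (u + 0 *\<^sub>R v)"
    by (intro tendsto_intros gr trr)
  have lim2: "(\<lambda>n. N (u + t (r n) *\<^sub>R v)) \<longlonglongrightarrow> N (u + 0 *\<^sub>R v)"
    by (intro N_tendsto[OF nN] tendsto_intros trr)
  have "(\<lambda>n. g (r n) \<bullet> (u + t (r n) *\<^sub>R v)) = (\<lambda>n. N (u + t (r n) *\<^sub>R v))"
    using tg(3) by (simp add: nf_def)
  then have "G \<bullet> u = N u" using LIMSEQ_unique[OF lim1] lim2 by simp
  then have "nf N u G" using le by (simp add: nf_def)
  then have GG: "G = G0" using nf_unique[OF nN sm u _ G0] by simp
  have "G0 \<bullet> v + \<epsilon> \<le> G \<bullet> v"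
  proof (rule tendsto_le[OF trivial_limit_sequentially _ tendsto_const])
    show "(\<lambda>n. g (r n) \<bullet> v) \<longlonglongrightarrow> G \<bullet> v" by (intro tendsto_intros gr)
    show "\<forall>\<^sub>F n in sequentially. G0 \<bullet> v + \<epsilon> \<le> g (r n) \<bullet> v" using tg(4) by (simp add: less_imp_le)
  qed
  then show False using GG e by simp
qed


lemma FT_ineq:
  assumes fin: "finite A" and xFT: "x \<in> FT N A" and J: "\<And>a. a \<in> A - {x} \<Longrightarrow> nf N (x - a) (J a)"
  shows "(\<Sum>a\<in>A-{x}. J a \<bullet> v) + (if x \<in> A then N v else 0) \<ge> 0"
proof -
  let ?A = "A - {x}"
  let ?S = "(\<Sum>a\<in>A-{x}. J a \<bullet> v) + (if x \<in> A then N v else 0)"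
  have main: "?S + real (card ?A) * \<epsilon> \<ge> 0" if e: "\<epsilon> > 0" for \<epsilon>
  proof -
    have "\<forall>\<^sub>F t in at_right 0. \<forall>a\<in>?A. \<forall>g. nf N ((x - a) + t *\<^sub>R v) g \<longrightarrow> g \<bullet> v \<le> J a \<bullet> v + \<epsilon>"
    proof (rule eventually_ball_finite[OF _ ballI])
      show "finite ?A" using fin by simp
      fix a assume a: "a \<in> ?A"
      show "\<forall>\<^sub>F t in at_right 0. \<forall>g. nf N ((x - a) + t *\<^sub>R v) g \<longrightarrow> g \<bullet> v \<le> J a \<bullet> v + \<epsilon>"
        by (rule deriv_bound[OF _ J[OF a] e]) (use a in auto)
    qed
    then obtain b where b: "b > 0" "\<And>t a g. t > 0 \<Longrightarrow> t < b \<Longrightarrow> a \<in> ?A \<Longrightarrow> nf N ((x - a) + t *\<^sub>R v) g \<Longrightarrow> g \<bullet> v \<le> J a \<bullet> v + \<epsilon>"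
      unfolding eventually_at_right_field by auto
    define t where "t = b / 2"
    have t: "t > 0" "t < b" using b by (auto simp: t_def)
    define g where "g a = (SOME g. nf N ((x - a) + t *\<^sub>R v) g)" for a
    have g: "nf N ((x - a) + t *\<^sub>R v) (g a)" for a
      unfolding g_def by (rule someI_ex, rule nf_exists[OF nN])
    have each: "N ((x + t *\<^sub>R v) - a) \<le> N (x - a) + t * (J a \<bullet> v + \<epsilon>)" if a: "a \<in> ?A" for a
    proof -
      have eq: "(x + t *\<^sub>R v) - a = (x - a) + t *\<^sub>R v" by simp
      have "N ((x + t *\<^sub>R v) - a) = g a \<bullet> ((x - a) + t *\<^sub>R v)" using g[of a] unfolding nf_def eq by simp
      also have "\<dots> = g a \<bullet> (x - a) + t * (g a \<bullet> v)" by (simp add: inner_add_right)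
      also have "\<dots> \<le> N (x - a) + t * (J a \<bullet> v + \<epsilon>)"
      proof (rule add_mono)
        show "g a \<bullet> (x - a) \<le> N (x - a)" using g[of a] unfolding nf_def by blast
        show "t * (g a \<bullet> v) \<le> t * (J a \<bullet> v + \<epsilon>)" using b(2)[OF t a g[of a]] t by (intro mult_left_mono) auto
      qed
      finally show ?thesis .
    qed
    have sumA: "(\<Sum>a\<in>A. f a) = (\<Sum>a\<in>?A. f a) + (if x \<in> A then f x else 0)" for f :: "pt \<Rightarrow> real"
    proof (cases "x \<in> A")
      case True
      then show ?thesis using fin sum.remove[OF fin True, of f] by simp
    next
      case False
      then have "?A = A" by simp
      then show ?thesis using False by simp
    qed
    have s0: "(\<Sum>a\<in>A. N (x - a)) = (\<Sum>a\<in>?A. N (x - a))"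
      using sumA[of "\<lambda>a. N (x - a)"] N0[OF nN] by simp
    have "(\<Sum>a\<in>?A. N (x - a)) = (\<Sum>a\<in>A. N (x - a))" using s0 by simp
    also have "(\<Sum>a\<in>A. N (x - a)) \<le> (\<Sum>a\<in>A. N ((x + t *\<^sub>R v) - a))" using xFT unfolding FT_def by blast
    also have "\<dots> = (\<Sum>a\<in>?A. N ((x + t *\<^sub>R v) - a)) + (if x \<in> A then t * N v else 0)"
      using t by (simp only: sumA) (simp add: Nscale[OF nN])
    also have "\<dots> \<le> (\<Sum>a\<in>?A. N (x - a) + t * (J a \<bullet> v + \<epsilon>)) + (if x \<in> A then t * N v else 0)"
      using each by (intro add_mono sum_mono order_refl) auto
    also have "\<dots> = (\<Sum>a\<in>?A. N (x - a)) + ((\<Sum>a\<in>?A. t * (J a \<bullet> v + \<epsilon>)) + (if x \<in> A then t * N v else 0))"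
      by (simp only: sum.distrib add.assoc)
    finally have 1: "0 \<le> (\<Sum>a\<in>?A. t * (J a \<bullet> v + \<epsilon>)) + (if x \<in> A then t * N v else 0)"
      by simp
    have 2: "(\<Sum>a\<in>?A. t * (J a \<bullet> v + \<epsilon>)) + (if x \<in> A then t * N v else 0) = t * (?S + real (card ?A) * \<epsilon>)"
      by (simp add: sum_distrib_left[symmetric] sum.distrib distrib_left)
    have "0 \<le> t * (?S + real (card ?A) * \<epsilon>)" using 1 2 by simp
    then show ?thesis using t by (simp add: zero_le_mult_iff)
  qed
  define S where "S = ?S"
  have main': "S + real (card ?A) * \<epsilon> \<ge> 0" if "\<epsilon> > 0" for \<epsilon> using main[OF that] by (simp add: S_def)
  have "S \<ge> 0"
  proof (rule ccontr)
    assume "\<not> S \<ge> 0"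
    then have neg: "S < 0" by simp
    define \<epsilon> where "\<epsilon> = - S / (2 * (real (card ?A) + 1))"
    have ep: "\<epsilon> > 0" using neg unfolding \<epsilon>_def by (intro divide_pos_pos) auto
    have "real (card ?A) * \<epsilon> \<le> (real (card ?A) + 1) * \<epsilon>" using ep by simp
    also have "\<dots> = - S / 2"
    proof -
      have "real (card ?A) + 1 > 0" by simp
      then show ?thesis unfolding \<epsilon>_def by (simp add: field_simps)
    qed
    finally show False using main'[OF ep] neg by linarith
  qed
  then show ?thesis by (simp add: S_def)
qed

end


definition unitH :: "(pt \<Rightarrow> real) \<Rightarrow> pt \<Rightarrow> pt \<Rightarrow> bool" where
  "unitH N z g \<longleftrightarrow> (\<exists>u. u \<noteq> 0 \<and> nf N u g) \<and> g \<bullet> z \<ge> 0"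

locale geo =
  fixes N :: "pt \<Rightarrow> real" and e z psi zeta :: pt
  assumes nN: "is_norm N" and sm: "smooth_norm N" and Ne: "N e = 1" and nfe: "nf N e psi"
    and psiz: "psi \<bullet> z = 0" and zetae: "zeta \<bullet> e = 0" and zetaz: "zeta \<bullet> z = 1"
    and dec: "\<And>u. u = (psi \<bullet> u) *\<^sub>R e + (zeta \<bullet> u) *\<^sub>R z"
begin

lemma psie: "psi \<bullet> e = 1" using nfe Ne by (simp add: nf_def)
lemma e0: "e \<noteq> 0" using Ne N0[OF nN] by auto

lemma vec_eqI: "g1 \<bullet> e = g2 \<bullet> e \<Longrightarrow> g1 \<bullet> z = g2 \<bullet> z \<Longrightarrow> g1 = g2"
proof -
  assume a: "g1 \<bullet> e = g2 \<bullet> e" "g1 \<bullet> z = g2 \<bullet> z"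
  have "(g1 - g2) \<bullet> u = 0" for u
  proof -
    have "(g1 - g2) \<bullet> u = (g1 - g2) \<bullet> ((psi \<bullet> u) *\<^sub>R e + (zeta \<bullet> u) *\<^sub>R z)" by (subst dec[of u]) simp
    also have "\<dots> = 0" using a by (simp add: inner_add_right inner_diff_left)
    finally show ?thesis .
  qed
  from this[of "g1 - g2"] show ?thesis by simp
qed

lemma alpha_bound: "nf N u g \<Longrightarrow> \<bar>g \<bullet> e\<bar> \<le> 1"
  using nf_abs[OF nN, of u g e] Ne by simp

lemma psi_abs: "\<bar>psi \<bullet> y\<bar> \<le> N y" using nf_abs[OF nN nfe] .

lemma psi_unique: "nf N e g \<Longrightarrow> g = psi" using nf_unique[OF nN sm e0 _ nfe] by simp
lemma mpsi_unique: "nf N (-e) g \<Longrightarrow> g = -psi"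
  using nf_unique[OF nN sm _ _ nf_neg[OF nN nfe]] e0 by simp

lemma unitH_psi: "unitH N z psi" using nfe e0 psiz by (auto simp: unitH_def)
lemma unitH_mpsi: "unitH N z (-psi)"
  unfolding unitH_def using nf_neg[OF nN nfe] e0 psiz by (intro conjI exI[of _ "-e"]) auto

lemma lemC:
  assumes G: "\<forall>y. G \<bullet> y \<le> N y" and g: "unitH N z g" and eq: "G \<bullet> e = g \<bullet> e"
  shows "G \<bullet> z \<le> g \<bullet> z"
proof (rule ccontr)
  assume "\<not> ?thesis"
  then have gt: "G \<bullet> z > g \<bullet> z" by simp
  obtain u where u: "u \<noteq> 0" "nf N u g" and gz: "g \<bullet> z \<ge> 0" using g by (auto simp: unitH_def)
  define \<alpha> where "\<alpha> = g \<bullet> e"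
  have ab: "\<bar>\<alpha>\<bar> \<le> 1" using alpha_bound[OF u(2)] by (simp add: \<alpha>_def)
  have Gz: "G \<bullet> z > 0" using gt gz by linarith
  show False
  proof (cases "\<bar>\<alpha>\<bar> < 1")
    case True
    define s where "s = (g \<bullet> z) / (G \<bullet> z)"
    have s: "0 \<le> s" "s < 1" using Gz gz gt unfolding s_def by (auto simp: divide_simps)
    have sG: "s * (G \<bullet> z) = g \<bullet> z" using Gz unfolding s_def by simp
    have geq: "g = s *\<^sub>R G + ((1 - s) * \<alpha>) *\<^sub>R psi"
    proof (rule vec_eqI)
      show "g \<bullet> e = (s *\<^sub>R G + ((1 - s) * \<alpha>) *\<^sub>R psi) \<bullet> e"
        unfolding inner_add_left inner_scaleR_left psie eq \<alpha>_def by (simp add: algebra_simps)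
      show "g \<bullet> z = (s *\<^sub>R G + ((1 - s) * \<alpha>) *\<^sub>R psi) \<bullet> z"
        unfolding inner_add_left inner_scaleR_left psiz sG by simp
    qed
    have Nu: "N u > 0" using Npos[OF nN u(1)] .
    have "N u = g \<bullet> u" using u(2) by (simp add: nf_def)
    also have "\<dots> = s * (G \<bullet> u) + ((1 - s) * \<alpha>) * (psi \<bullet> u)"
      by (subst geq) (simp only: inner_add_left inner_scaleR_left)
    also have "\<dots> \<le> s * N u + (1 - s) * (\<bar>\<alpha>\<bar> * N u)"
    proof (rule add_mono)
      show "s * (G \<bullet> u) \<le> s * N u" using G s by (intro mult_left_mono) auto
      have "\<alpha> * (psi \<bullet> u) \<le> \<bar>\<alpha> * (psi \<bullet> u)\<bar>" by (rule abs_ge_self)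
      also have "\<dots> = \<bar>\<alpha>\<bar> * \<bar>psi \<bullet> u\<bar>" by (rule abs_mult)
      also have "\<dots> \<le> \<bar>\<alpha>\<bar> * N u" using psi_abs[of u] by (intro mult_left_mono) auto
      finally have "\<alpha> * (psi \<bullet> u) \<le> \<bar>\<alpha>\<bar> * N u" .
      then have "(1 - s) * (\<alpha> * (psi \<bullet> u)) \<le> (1 - s) * (\<bar>\<alpha>\<bar> * N u)" using s by (intro mult_left_mono) auto
      then show "((1 - s) * \<alpha>) * (psi \<bullet> u) \<le> (1 - s) * (\<bar>\<alpha>\<bar> * N u)" by (simp only: mult.assoc)
    qed
    also have "\<dots> < N u"
    proof -
      have "\<bar>\<alpha>\<bar> * N u < 1 * N u" using True Nu by (intro mult_strict_right_mono) auto
      then have "(1 - s) * (\<bar>\<alpha>\<bar> * N u) < (1 - s) * N u" using s by (intro mult_strict_left_mono) auto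
      then show ?thesis by (simp add: algebra_simps)
    qed
    finally show False by simp
  next
    case False
    then have "\<alpha> = 1 \<or> \<alpha> = -1" using ab by auto
    then show False
    proof
      assume "\<alpha> = 1"
      then have "nf N e G" using G eq Ne by (simp add: nf_def \<alpha>_def)
      then have "G = psi" by (rule psi_unique)
      then show False using Gz psiz by simp
    next
      assume "\<alpha> = -1"
      then have "nf N (-e) G" using G eq Ne N0[OF nN] Nneg[OF nN, of e] by (simp add: nf_def \<alpha>_def)
      then have "G = -psi" by (rule mpsi_unique)
      then show False using Gz psiz by simp
    qed
  qed
qed

lemma determ: "unitH N z g1 \<Longrightarrow> unitH N z g2 \<Longrightarrow> g1 \<bullet> e = g2 \<bullet> e \<Longrightarrow> g1 = g2"
proof -
  assume a: "unitH N z g1" "unitH N z g2" "g1 \<bullet> e = g2 \<bullet> e"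
  have le: "\<forall>y. g \<bullet> y \<le> N y" if "unitH N z g" for g using that by (auto simp: unitH_def nf_def)
  have "g1 \<bullet> z \<le> g2 \<bullet> z" using lemC[OF le[OF a(1)] a(2) a(3)] .
  moreover have "g2 \<bullet> z \<le> g1 \<bullet> z" using lemC[OF le[OF a(2)] a(1) a(3)[symmetric]] .
  ultimately show ?thesis using a(3) vec_eqI by simp
qed

lemma lemM:
  assumes w: "w \<noteq> 0" "nf N w gm" and zw: "zeta \<bullet> w \<ge> 0"
    and gi: "unitH N z gi" and ord: "gi \<bullet> e \<ge> gm \<bullet> e"
  shows "gi \<bullet> w \<ge> psi \<bullet> w \<and> (gi \<bullet> w = psi \<bullet> w \<longrightarrow> gi \<bullet> e = 1)"
proof -
  define \<alpha>m where "\<alpha>m = gm \<bullet> e"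
  define \<alpha>i where "\<alpha>i = gi \<bullet> e"
  have abm: "\<bar>\<alpha>m\<bar> \<le> 1" using alpha_bound[OF w(2)] by (simp add: \<alpha>m_def)
  have abi: "\<bar>\<alpha>i\<bar> \<le> 1" using gi alpha_bound by (auto simp: unitH_def \<alpha>i_def)
  show ?thesis
  proof (cases "\<alpha>m = 1")
    case True
    then have "\<alpha>i = 1" using ord abi by (auto simp: \<alpha>m_def \<alpha>i_def)
    then have "gi = psi" using determ[OF gi unitH_psi] psie by (simp add: \<alpha>i_def)
    then show ?thesis using psie by simp
  next
    case False
    then have m1: "\<alpha>m < 1" using abm by auto
    define t where "t = (1 - \<alpha>i) / (1 - \<alpha>m)"
    have t: "0 \<le> t" using m1 abi by (auto simp: t_def)
    have t1: "t \<le> 1" using m1 ord by (auto simp: t_def \<alpha>i_def \<alpha>m_def divide_simps)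
    define G where "G = t *\<^sub>R gm + (1 - t) *\<^sub>R psi"
    have GN: "\<forall>y. G \<bullet> y \<le> N y"
    proof
      fix y
      have "G \<bullet> y = t * (gm \<bullet> y) + (1 - t) * (psi \<bullet> y)" by (simp add: G_def inner_add_left)
      also have "\<dots> \<le> t * N y + (1 - t) * N y"
        using w(2) nfe t t1 by (intro add_mono mult_left_mono) (auto simp: nf_def)
      finally show "G \<bullet> y \<le> N y" by (simp add: algebra_simps)
    qed
    have Ge: "G \<bullet> e = \<alpha>i"
    proof -
      have "G \<bullet> e = t * \<alpha>m + (1 - t)" by (simp add: G_def inner_add_left psie \<alpha>m_def)
      also have "\<dots> = t * (\<alpha>m - 1) + 1" by (simp add: algebra_simps)
      also have "\<dots> = \<alpha>i"
      proof -
        have "t * (\<alpha>m - 1) = -(1 - \<alpha>i)" using m1 unfolding t_def by (simp add: field_simps)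
        then show ?thesis by simp
      qed
      finally show ?thesis .
    qed
    have Gz: "G \<bullet> z \<le> gi \<bullet> z" using lemC[OF GN gi] Ge by (simp add: \<alpha>i_def)
    have gidec: "gi = G + (gi \<bullet> z - G \<bullet> z) *\<^sub>R zeta"
      by (rule vec_eqI) (use Ge in \<open>auto simp: inner_add_left zetae zetaz \<alpha>i_def\<close>)
    have "gi \<bullet> w = G \<bullet> w + (gi \<bullet> z - G \<bullet> z) * (zeta \<bullet> w)" by (subst gidec) (simp add: inner_add_left)
    also have "\<dots> \<ge> G \<bullet> w" using Gz zw by simp
    finally have giG: "gi \<bullet> w \<ge> G \<bullet> w" .
    have Gw: "G \<bullet> w = t * N w + (1 - t) * (psi \<bullet> w)" using w(2) by (simp add: G_def inner_add_left nf_def)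
    have pN: "psi \<bullet> w \<le> N w" using nfe by (simp add: nf_def)
    have "G \<bullet> w - psi \<bullet> w = t * (N w - psi \<bullet> w)" using Gw by (simp add: algebra_simps)
    also have "\<dots> \<ge> 0" using t pN by simp
    finally have Gp: "G \<bullet> w \<ge> psi \<bullet> w" by simp
    have eqc: "gi \<bullet> e = 1" if eqw: "gi \<bullet> w = psi \<bullet> w"
    proof (rule ccontr)
      assume ne: "gi \<bullet> e \<noteq> 1"
      then have "t > 0" using abi m1 by (auto simp: t_def \<alpha>i_def)
      have "G \<bullet> w = psi \<bullet> w" using giG Gp eqw by simp
      then have "t * (N w - psi \<bullet> w) = 0" using Gw by (simp add: algebra_simps)
      then have "N w - psi \<bullet> w = 0" using \<open>t > 0\<close> by simp
      then have "N w = psi \<bullet> w" by simp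
      then have "nf N w psi" using nfe by (simp add: nf_def)
      then have "psi = gm" using nf_unique[OF nN sm w(1) _ w(2)] by simp
      then show False using m1 psie by (simp add: \<alpha>m_def)
    qed
    show ?thesis using giG Gp eqc by simp
  qed
qed

end



lemma median_partition:
  fixes f :: "'a \<Rightarrow> real"
  assumes fin: "finite S" and c: "card S = 2 * m + 1"
  shows "\<exists>p U D. S = insert p (U \<union> D) \<and> p \<notin> U \<and> p \<notin> D \<and> U \<inter> D = {} \<and> card U = m \<and> card D = m
           \<and> finite U \<and> finite D \<and> (\<forall>a\<in>U. f a \<ge> f p) \<and> (\<forall>a\<in>D. f a \<le> f p)"
proof -
  obtain xs where xs: "set xs = S" "distinct xs" using finite_distinct_list[OF fin] by blast
  define ys where "ys = sort_key f xs"
  have ys: "set ys = S" "distinct ys" "sorted (map f ys)" using xs by (auto simp: ys_def)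
  have len: "length ys = 2 * m + 1" using distinct_card[OF ys(2)] ys(1) c by simp
  define p where "p = ys ! m"
  define D where "D = set (take m ys)"
  define U where "U = set (drop (Suc m) ys)"
  have split: "ys = take m ys @ p # drop (Suc m) ys" using len unfolding p_def
    by (simp add: id_take_nth_drop)
  have dist: "distinct (take m ys @ p # drop (Suc m) ys)" using ys(2) split by simp
  have "S = set (take m ys @ p # drop (Suc m) ys)" using ys(1) split by simp
  then have S: "S = insert p (U \<union> D)" unfolding U_def D_def by auto
  have sorted_ys: "f (ys ! i) \<le> f (ys ! j)" if "i \<le> j" "j < length ys" for i j
  proof -
    have "map f ys ! i \<le> map f ys ! j" using sorted_nth_mono[OF ys(3)] that by simp
    then show ?thesis using that by simp
  qed
  have Up: "\<forall>a\<in>U. f a \<ge> f p"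
  proof
    fix a assume "a \<in> U"
    then obtain k where k: "k < length (drop (Suc m) ys)" "a = drop (Suc m) ys ! k" unfolding U_def in_set_conv_nth by blast
    then have "a = ys ! (Suc m + k)" using len by simp
    moreover have "Suc m + k < length ys" using k len by simp
    ultimately show "f a \<ge> f p" unfolding p_def using sorted_ys[of m "Suc m + k"] by simp
  qed
  have Dp: "\<forall>a\<in>D. f a \<le> f p"
  proof
    fix a assume "a \<in> D"
    then obtain k where k: "k < length (take m ys)" "a = take m ys ! k" unfolding D_def in_set_conv_nth by blast
    then have "a = ys ! k" "k < m" using len by auto
    then show "f a \<le> f p" unfolding p_def using sorted_ys[of k m] len by simp
  qed
  have cD: "card D = m" unfolding D_def using ys(2) len by (simp add: distinct_card)
  have cU: "card U = m" unfolding U_def using ys(2) len by (simp add: distinct_card)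
  have "p \<notin> U" "p \<notin> D" "U \<inter> D = {}" using dist unfolding U_def D_def by auto
  then show ?thesis using S Up Dp cD cU by (intro exI[of _ p] exI[of _ U] exI[of _ D]) (auto simp: U_def D_def)
qed

context geo begin

lemma geo_neg: "geo N (-e) z (-psi) zeta"
proof
  show "is_norm N" by (rule nN)
  show "smooth_norm N" by (rule sm)
  show "N (-e) = 1" using Ne Nneg[OF nN] by simp
  show "nf N (-e) (-psi)" using nf_neg[OF nN nfe] .
  show "- psi \<bullet> z = 0" using psiz by simp
  show "zeta \<bullet> - e = 0" using zetae by simp
  show "zeta \<bullet> z = 1" by (rule zetaz)
  fix u show "u = (- psi \<bullet> u) *\<^sub>R - e + (zeta \<bullet> u) *\<^sub>R z" using dec[of u] by simp
qed

lemma lemM_neg: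
  assumes w: "w \<noteq> 0" "nf N w gm" and zw: "zeta \<bullet> w \<ge> 0"
    and gj: "unitH N z gj" and ord: "gj \<bullet> e \<le> gm \<bullet> e"
  shows "gj \<bullet> w \<ge> - (psi \<bullet> w) \<and> (gj \<bullet> w = - (psi \<bullet> w) \<longrightarrow> gj \<bullet> e = -1)"
  using geo.lemM[OF geo_neg w zw gj] ord by auto

lemma choose_w:
  assumes gm: "unitH N z gm"
  shows "\<exists>w. w \<noteq> 0 \<and> nf N w gm \<and> zeta \<bullet> w \<ge> 0"
proof -
  obtain u where u: "u \<noteq> 0" "nf N u gm" and gz: "gm \<bullet> z \<ge> 0" using gm by (auto simp: unitH_def)
  have gdec: "gm = (gm \<bullet> e) *\<^sub>R psi + (gm \<bullet> z) *\<^sub>R zeta"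
    by (rule vec_eqI) (auto simp: inner_add_left psie psiz zetae zetaz)
  have ab: "\<bar>gm \<bullet> e\<bar> \<le> 1" using alpha_bound[OF u(2)] .
  have Nu: "N u > 0" using Npos[OF nN u(1)] .
  have pa: "(gm \<bullet> e) * (psi \<bullet> u) \<le> N u"
  proof -
    have "(gm \<bullet> e) * (psi \<bullet> u) \<le> \<bar>gm \<bullet> e\<bar> * \<bar>psi \<bullet> u\<bar>" by (metis abs_ge_self abs_mult)
    also have "\<dots> \<le> 1 * N u" using ab psi_abs[of u] by (intro mult_mono) auto
    finally show ?thesis by simp
  qed
  have Nudec: "N u = (gm \<bullet> e) * (psi \<bullet> u) + (gm \<bullet> z) * (zeta \<bullet> u)"
  proof -
    have "N u = gm \<bullet> u" using u(2) by (simp add: nf_def)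
    also have "\<dots> = (gm \<bullet> e) * (psi \<bullet> u) + (gm \<bullet> z) * (zeta \<bullet> u)"
      by (subst gdec) (simp only: inner_add_left inner_scaleR_left)
    finally show ?thesis .
  qed
  show ?thesis
  proof (cases "gm \<bullet> z > 0")
    case True
    have "(gm \<bullet> z) * (zeta \<bullet> u) \<ge> 0" using Nudec pa by linarith
    then have "zeta \<bullet> u \<ge> 0" using True by (simp add: zero_le_mult_iff)
    then show ?thesis using u by auto
  next
    case False
    then have z0: "gm \<bullet> z = 0" using gz by simp
    have "N u \<le> \<bar>gm \<bullet> e\<bar> * N u"
    proof -
      have "N u = (gm \<bullet> e) * (psi \<bullet> u)" using Nudec z0 by simp
      also have "\<dots> \<le> \<bar>gm \<bullet> e\<bar> * \<bar>psi \<bullet> u\<bar>" by (metis abs_ge_self abs_mult)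
      also have "\<dots> \<le> \<bar>gm \<bullet> e\<bar> * N u" using psi_abs[of u] by (intro mult_left_mono) auto
      finally show ?thesis .
    qed
    then have "\<bar>gm \<bullet> e\<bar> \<ge> 1" using Nu by simp
    then have "gm \<bullet> e = 1 \<or> gm \<bullet> e = -1" using ab by auto
    then show ?thesis
    proof
      assume "gm \<bullet> e = 1"
      then have "gm = psi" using gdec z0 by simp
      then show ?thesis using nfe e0 zetae by (intro exI[of _ e]) auto
    next
      assume "gm \<bullet> e = -1"
      then have "gm = -psi" using gdec z0 by simp
      then show ?thesis using nf_neg[OF nN nfe] e0 zetae by (intro exI[of _ "-e"]) auto
    qed
  qed
qed

lemma central:
  assumes fin: "finite S" and c: "card S = 2 * m + 1" and G: "\<forall>a\<in>S. unitH N z (G a)"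
    and sumle: "\<And>w. (\<Sum>a\<in>S. G a \<bullet> w) \<le> N w"
  shows "\<exists>p U D. S = insert p (U \<union> D) \<and> p \<notin> U \<and> p \<notin> D \<and> U \<inter> D = {} \<and> card U = card D
           \<and> finite U \<and> finite D \<and> (\<forall>a\<in>U. G a = psi) \<and> (\<forall>a\<in>D. G a = -psi)"
proof -
  obtain p U D where PP: "S = insert p (U \<union> D) \<and> p \<notin> U \<and> p \<notin> D \<and> U \<inter> D = {} \<and> card U = m \<and> card D = m
           \<and> finite U \<and> finite D \<and> (\<forall>a\<in>U. G a \<bullet> e \<ge> G p \<bullet> e) \<and> (\<forall>a\<in>D. G a \<bullet> e \<le> G p \<bullet> e)"
    using median_partition[OF fin c, of "\<lambda>a. G a \<bullet> e"] by (elim exE) (rule that)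
  have P: "S = insert p (U \<union> D)" "p \<notin> U" "p \<notin> D" "U \<inter> D = {}" "card U = m" "card D = m"
    "finite U" "finite D" "\<forall>a\<in>U. G a \<bullet> e \<ge> G p \<bullet> e" "\<forall>a\<in>D. G a \<bullet> e \<le> G p \<bullet> e"
    using PP by simp_all
  have pS: "p \<in> S" using P(1) by auto
  obtain w where w: "w \<noteq> 0" "nf N w (G p)" "zeta \<bullet> w \<ge> 0" using choose_w G pS by blast
  have US: "U \<subseteq> S" "D \<subseteq> S" using P(1) by auto
  have GS: "unitH N z (G a)" if "a \<in> S" for a using G that by blast
  have Ui: "G a \<bullet> w \<ge> psi \<bullet> w \<and> (G a \<bullet> w = psi \<bullet> w \<longrightarrow> G a \<bullet> e = 1)" if "a \<in> U" for a
  proof -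
    have "G a \<bullet> e \<ge> G p \<bullet> e" using P(9) that by blast
    then show ?thesis using lemM[OF w(1,2,3) GS] that US(1) by blast
  qed
  have Di: "G a \<bullet> w \<ge> - (psi \<bullet> w) \<and> (G a \<bullet> w = - (psi \<bullet> w) \<longrightarrow> G a \<bullet> e = -1)" if "a \<in> D" for a
  proof -
    have "G a \<bullet> e \<le> G p \<bullet> e" using P(10) that by blast
    then show ?thesis using lemM_neg[OF w(1,2,3) GS] that US(2) by blast
  qed
  have sumS: "(\<Sum>a\<in>S. G a \<bullet> w) = G p \<bullet> w + ((\<Sum>a\<in>U. G a \<bullet> w) + (\<Sum>a\<in>D. G a \<bullet> w))"
  proof -
    have "(\<Sum>a\<in>S. G a \<bullet> w) = G p \<bullet> w + (\<Sum>a\<in>U \<union> D. G a \<bullet> w)"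
      unfolding P(1) using P(2,3,7,8) by (subst sum.insert) auto
    also have "(\<Sum>a\<in>U \<union> D. G a \<bullet> w) = (\<Sum>a\<in>U. G a \<bullet> w) + (\<Sum>a\<in>D. G a \<bullet> w)"
      by (rule sum.union_disjoint[OF P(7) P(8) P(4)])
    finally show ?thesis .
  qed
  have Gp: "G p \<bullet> w = N w" using w(2) by (simp add: nf_def)
  have "(\<Sum>a\<in>U. G a \<bullet> w - psi \<bullet> w) + (\<Sum>a\<in>D. G a \<bullet> w + psi \<bullet> w)
        = (\<Sum>a\<in>U. G a \<bullet> w) + (\<Sum>a\<in>D. G a \<bullet> w)"
    using P(5,6) by (simp add: sum_subtractf sum.distrib)
  also have "\<dots> \<le> 0" using sumle[of w] sumS Gp by linarith
  finally have tot: "(\<Sum>a\<in>U. G a \<bullet> w - psi \<bullet> w) + (\<Sum>a\<in>D. G a \<bullet> w + psi \<bullet> w) \<le> 0" .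
  have nnU: "\<forall>a\<in>U. 0 \<le> G a \<bullet> w - psi \<bullet> w" using Ui by auto
  have nnD: "\<forall>a\<in>D. 0 \<le> G a \<bullet> w + psi \<bullet> w"
  proof
    fix a assume "a \<in> D" then have "G a \<bullet> w \<ge> - (psi \<bullet> w)" using Di by blast
    then show "0 \<le> G a \<bullet> w + psi \<bullet> w" by linarith
  qed
  have s1: "(\<Sum>a\<in>U. G a \<bullet> w - psi \<bullet> w) \<ge> 0" using nnU by (simp add: sum_nonneg)
  have s2: "(\<Sum>a\<in>D. G a \<bullet> w + psi \<bullet> w) \<ge> 0" using nnD by (simp add: sum_nonneg)
  have z1: "(\<Sum>a\<in>U. G a \<bullet> w - psi \<bullet> w) = 0" using tot s1 s2 by linarith
  have z2: "(\<Sum>a\<in>D. G a \<bullet> w + psi \<bullet> w) = 0" using tot s1 s2 by linarith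
  have "\<forall>a\<in>U. G a \<bullet> w - psi \<bullet> w = 0"
    using sum_nonneg_eq_0_iff[OF P(7), of "\<lambda>a. G a \<bullet> w - psi \<bullet> w"] nnU z1 by simp
  then have Uv: "\<forall>a\<in>U. G a = psi"
  proof (intro ballI)
    fix a assume "\<forall>a\<in>U. G a \<bullet> w - psi \<bullet> w = 0" "a \<in> U"
    then have "G a \<bullet> w = psi \<bullet> w" by simp
    then have "G a \<bullet> e = 1" using Ui \<open>a \<in> U\<close> by blast
    then show "G a = psi" using determ[OF GS unitH_psi, of a] US \<open>a \<in> U\<close> psie by auto
  qed
  have "\<forall>a\<in>D. G a \<bullet> w + psi \<bullet> w = 0"
    using sum_nonneg_eq_0_iff[OF P(8), of "\<lambda>a. G a \<bullet> w + psi \<bullet> w"] nnD z2 by simp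
  then have Dv: "\<forall>a\<in>D. G a = -psi"
  proof (intro ballI)
    fix a assume "\<forall>a\<in>D. G a \<bullet> w + psi \<bullet> w = 0" "a \<in> D"
    then have "G a \<bullet> w = - (psi \<bullet> w)" by (simp add: add_eq_0_iff)
    then have "G a \<bullet> e = -1" using Di \<open>a \<in> D\<close> by blast
    then show "G a = -psi" using determ[OF GS unitH_mpsi, of a] US \<open>a \<in> D\<close> psie by auto
  qed
  show ?thesis
    by (intro exI[of _ p] exI[of _ U] exI[of _ D] conjI) (use P Uv Dv in simp_all)
qed

end


definition perp :: "pt \<Rightarrow> pt" where "perp v = (\<chi> i. if i = 1 then - (v$2) else v$1)"

lemma inner2: "(u::pt) \<bullet> v = u$1 * v$1 + u$2 * v$2"
  by (simp add: inner_vec_def sum_2)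

lemma perp_comp: "perp v $ 1 = - (v$2)" "perp v $ 2 = v$1"
  by (simp_all add: perp_def)

lemma perp_inner: "v \<bullet> perp v = 0" by (simp add: inner2 perp_comp)

lemma perp_eq0: "perp v = 0 \<longleftrightarrow> v = 0"
  by (auto simp: vec_eq_iff forall_2 perp_comp)

lemma perp_ker:
  assumes v: "v \<noteq> 0" and d: "v \<bullet> d = 0"
  shows "d = ((perp v \<bullet> d) / (v \<bullet> v)) *\<^sub>R perp v"
proof -
  have vv: "v \<bullet> v \<noteq> 0" using v by simp
  have vv2: "v$1 * v$1 + v$2 * v$2 \<noteq> 0" using vv by (simp add: inner2)
  have d2: "v$1 * d$1 + v$2 * d$2 = 0" using d by (simp add: inner2)
  have c1: "d$1 * (v$1 * v$1 + v$2 * v$2) = (- (v$2) * d$1 + v$1 * d$2) * (- (v$2))"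
  proof -
    have "v$1 * d$2 * v$2 = - (v$1 * v$1 * d$1)" using d2 by algebra
    then show ?thesis by algebra
  qed
  have c2: "d$2 * (v$1 * v$1 + v$2 * v$2) = (- (v$2) * d$1 + v$1 * d$2) * (v$1)"
  proof -
    have "v$2 * d$1 * v$1 = - (v$2 * v$2 * d$2)" using d2 by algebra
    then show ?thesis by algebra
  qed
  show ?thesis
    unfolding vec_eq_iff forall_2 using vv2 c1 c2
    by (simp add: inner2 perp_comp field_simps)
qed

lemma ker_span:
  assumes h: "(h::pt) \<noteq> 0" and e: "e \<noteq> 0" "h \<bullet> e = 0" and d: "h \<bullet> d = 0"
  shows "\<exists>c. d = c *\<^sub>R e"
proof -
  obtain c1 where c1: "d = c1 *\<^sub>R perp h" using perp_ker[OF h d] by blast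
  obtain c2 where c2: "e = c2 *\<^sub>R perp h" using perp_ker[OF h e(2)] by blast
  have "c2 \<noteq> 0" using c2 e(1) by auto
  then have "d = (c1 / c2) *\<^sub>R e" using c1 c2 by simp
  then show ?thesis by blast
qed

lemma support_hull:
  assumes fin: "finite A" and x: "x \<in> frontier (convex hull A)"
  shows "\<exists>h::pt. h \<noteq> 0 \<and> (\<forall>a\<in>A. h \<bullet> a \<le> h \<bullet> x)"
proof -
  let ?H = "convex hull A"
  have cH: "convex ?H" by (rule convex_convex_hull)
  have cl: "closure ?H = ?H" using compact_convex_hull[OF finite_imp_compact[OF fin]] by (simp add: compact_imp_closed closure_closed)
  have xH: "x \<in> ?H" using x cl by (simp add: frontier_def)
  have xI: "x \<notin> interior ?H" using x by (simp add: frontier_def)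
  show ?thesis
  proof (cases "interior ?H = {}")
    case True
    obtain a b where ab: "a \<noteq> 0" "?H \<subseteq> {y. a \<bullet> y = b}"
      using empty_interior_subset_hyperplane[OF cH True] by blast
    have "\<forall>y\<in>A. a \<bullet> y \<le> a \<bullet> x"
    proof
      fix y assume "y \<in> A"
      then have "y \<in> ?H" using hull_subset[of A convex] by blast
      then have "a \<bullet> y = b" "a \<bullet> x = b" using ab(2) xH by auto
      then show "a \<bullet> y \<le> a \<bullet> x" by simp
    qed
    then show ?thesis using ab(1) by blast
  next
    case False
    obtain a b where ab: "a \<noteq> 0" "\<forall>y\<in>interior ?H. a \<bullet> y \<le> b" "\<forall>y\<in>{x}. a \<bullet> y \<ge> b"
      using separating_hyperplane_sets[OF convex_interior[OF cH] convex_singleton False, of x] xI by auto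
    have "interior ?H \<subseteq> {y. a \<bullet> y \<le> b}" using ab(2) by auto
    then have "closure (interior ?H) \<subseteq> {y. a \<bullet> y \<le> b}"
      by (intro closure_minimal closed_halfspace_le)
    then have "?H \<subseteq> {y. a \<bullet> y \<le> b}" using convex_closure_interior[OF cH False] cl by simp
    then have "\<forall>y\<in>A. a \<bullet> y \<le> a \<bullet> x" using ab(3) hull_subset[of A convex] by force
    then show ?thesis using ab(1) by blast
  qed
qed

lemma FT_suff:
  assumes nN: "is_norm N" and fin: "finite C" and g: "\<And>c. c \<in> C \<Longrightarrow> nf N (x - c) (g c)"
    and s0: "(\<Sum>c\<in>C. g c) = 0"
  shows "x \<in> FT N C"
  unfolding FT_def
proof (intro CollectI allI)
  fix y
  have "(\<Sum>c\<in>C. N (x - c)) = (\<Sum>c\<in>C. g c \<bullet> (y - x)) + (\<Sum>c\<in>C. g c \<bullet> (x - c))"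
  proof -
    have "(\<Sum>c\<in>C. g c \<bullet> (y - x)) = (\<Sum>c\<in>C. g c) \<bullet> (y - x)" by (simp add: inner_sum_left)
    also have "\<dots> = 0" using s0 by simp
    finally show ?thesis using g by (simp add: nf_def)
  qed
  also have "\<dots> = (\<Sum>c\<in>C. g c \<bullet> (y - c))"
    by (simp add: sum.distrib[symmetric] inner_diff_right)
  also have "\<dots> \<le> (\<Sum>c\<in>C. N (y - c))" using g by (intro sum_mono) (auto simp: nf_def)
  finally show "(\<Sum>c\<in>C. N (x - c)) \<le> (\<Sum>c\<in>C. N (y - c))" .
qed

lemma dc_lemma:
  assumes nN: "is_norm N" and fU: "finite U" and fD: "finite D" and dj: "U \<inter> D = {}"
    and cd: "card U = card D" and pN: "\<forall>y. psi \<bullet> y \<le> N y" and e: "psi \<bullet> e = 1" "N e = 1"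
    and U: "\<forall>a\<in>U. psi \<bullet> (x - a) = N (x - a)" and D: "\<forall>b\<in>D. psi \<bullet> (x - b) = - N (x - b)"
  shows "double_cluster N (U \<union> D)"
proof -
  define m where "m = card U"
  obtain X where X: "bij_betw X {0..<card D} D" using ex_bij_betw_nat_finite[OF fD] by blast
  obtain Y where Y: "bij_betw Y {0..<card U} U" using ex_bij_betw_nat_finite[OF fU] by blast
  have XD: "X ` {..<m} = D" using X cd by (simp add: m_def bij_betw_def atLeast0LessThan)
  have YU: "Y ` {..<m} = U" using Y by (simp add: m_def bij_betw_def atLeast0LessThan)
  define F where "F = unit_ball N \<inter> {y. psi \<bullet> y = 1}"
  have face: "proper_exposed_face N F"
    unfolding proper_exposed_face_def supporting_line_def
  proof (intro exI conjI)
    show "F = unit_ball N \<inter> {y. psi \<bullet> y = 1}" by (rule F_def)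
    show "linear ((\<bullet>) psi)" by (simp add: linear_iff inner_add_right)
    show "(\<bullet>) psi \<noteq> (\<lambda>_. 0)" using e(1) by (metis zero_neq_one)
    show "{y. psi \<bullet> y = 1} \<inter> unit_ball N \<noteq> {}" using e by (auto simp: unit_ball_def)
    show "\<forall>y\<in>unit_ball N. psi \<bullet> y \<le> 1" using pN by (auto simp: unit_ball_def intro: order_trans)
  qed (rule refl)
  have pair: "(1 / N (b - a)) *\<^sub>R (b - a) \<in> F" if a: "a \<in> U" and b: "b \<in> D" for a b
  proof -
    have ne: "b \<noteq> a" using a b dj by auto
    have Nd: "N (b - a) > 0" using Npos[OF nN] ne by simp
    have "psi \<bullet> (b - a) = psi \<bullet> (x - a) - psi \<bullet> (x - b)" by (simp add: inner_diff_right)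
    also have "\<dots> = N (x - a) + N (x - b)" using U D a b by simp
    also have "\<dots> \<ge> N (b - a)"
    proof -
      have "b - a = (x - a) - (x - b)" by simp
      then show ?thesis using Ndiff[OF nN, of "x - a" "x - b"] by simp
    qed
    finally have "psi \<bullet> (b - a) \<ge> N (b - a)" .
    then have eq: "psi \<bullet> (b - a) = N (b - a)" using pN by (simp add: order_antisym)
    show ?thesis unfolding F_def unit_ball_def using Nd eq by (simp add: Nscale[OF nN])
  qed
  have card: "card (U \<union> D) = 2 * m" using card_Un_disjoint[OF fU fD dj] cd by (simp add: m_def)
  show ?thesis
    unfolding double_cluster_def
  proof (intro exI conjI)
    show "U \<union> D = X ` {..<m} \<union> Y ` {..<m}" using XD YU by blast
    show "card (U \<union> D) = 2 * m" by (rule card)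
    show "proper_exposed_face N F" by (rule face)
    show "\<forall>i<m. (1 / N (X i - Y i)) *\<^sub>R (X i - Y i) \<in> F"
      using pair XD YU by blast
  qed
qed



context geo begin

lemma unitH_of:
  assumes u: "u \<noteq> 0" and g: "nf N u g" and zu: "zeta \<bullet> u \<ge> 0"
  shows "g \<bullet> z \<ge> 0"
proof -
  define \<alpha> where "\<alpha> = psi \<bullet> u"
  define \<beta> where "\<beta> = zeta \<bullet> u"
  have ud: "u = \<alpha> *\<^sub>R e + \<beta> *\<^sub>R z" using dec[of u] by (simp add: \<alpha>_def \<beta>_def)
  have "N u = g \<bullet> u" using g by (simp add: nf_def)
  also have "\<dots> = \<alpha> * (g \<bullet> e) + \<beta> * (g \<bullet> z)" by (subst ud) (simp only: inner_add_right inner_scaleR_right)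
  finally have Nu: "N u = \<alpha> * (g \<bullet> e) + \<beta> * (g \<bullet> z)" .
  have "\<alpha> * (g \<bullet> e) \<le> \<bar>\<alpha>\<bar> * \<bar>g \<bullet> e\<bar>" by (metis abs_ge_self abs_mult)
  also have "\<dots> \<le> \<bar>\<alpha>\<bar> * 1" using alpha_bound[OF g] by (intro mult_left_mono) auto
  also have "\<dots> \<le> N u" using psi_abs[of u] by (simp add: \<alpha>_def)
  finally have "\<beta> * (g \<bullet> z) \<ge> 0" using Nu by linarith
  show ?thesis
  proof (cases "\<beta> > 0")
    case True
    then show ?thesis using \<open>\<beta> * (g \<bullet> z) \<ge> 0\<close> by (simp add: zero_le_mult_iff)
  next
    case False
    then have b0: "\<beta> = 0" using zu by (simp add: \<beta>_def)
    then have ue: "u = \<alpha> *\<^sub>R e" using ud by simp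
    have "\<alpha> \<noteq> 0" using u ue by auto
    then show ?thesis
    proof (cases "\<alpha> > 0")
      case True
      have "nf N ((1 / \<alpha>) *\<^sub>R u) g" using nf_scale[OF nN _ g, of "1 / \<alpha>"] True by simp
      then have "nf N e g" using ue True by simp
      then have "g = psi" by (rule psi_unique)
      then show ?thesis using psiz by simp
    next
      case False
      then have neg: "\<alpha> < 0" using \<open>\<alpha> \<noteq> 0\<close> by simp
      have "nf N ((- 1 / \<alpha>) *\<^sub>R u) g" using nf_scale[OF nN _ g, of "- 1 / \<alpha>"] neg by (simp add: divide_simps)
      then have "nf N (-e) g" using ue neg by simp
      then have "g = -psi" by (rule mpsi_unique)
      then show ?thesis using psiz by simp
    qed
  qed
qed

lemma pm_psi:
  assumes g: "unitH N z g" and gz: "g \<bullet> z = 0"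
  shows "g = psi \<or> g = -psi"
proof -
  obtain u where u: "u \<noteq> 0" "nf N u g" using g by (auto simp: unitH_def)
  have gdec: "g = (g \<bullet> e) *\<^sub>R psi"
    by (rule vec_eqI) (use gz in \<open>auto simp: psie psiz\<close>)
  have ab: "\<bar>g \<bullet> e\<bar> \<le> 1" using alpha_bound[OF u(2)] .
  have Nu: "N u > 0" using Npos[OF nN u(1)] .
  have "N u = g \<bullet> u" using u(2) by (simp add: nf_def)
  also have "\<dots> = (g \<bullet> e) * (psi \<bullet> u)" by (subst gdec) simp
  also have "\<dots> \<le> \<bar>g \<bullet> e\<bar> * \<bar>psi \<bullet> u\<bar>" by (metis abs_ge_self abs_mult)
  also have "\<dots> \<le> \<bar>g \<bullet> e\<bar> * N u" using psi_abs[of u] by (intro mult_left_mono) auto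
  finally have "\<bar>g \<bullet> e\<bar> \<ge> 1" using Nu by simp
  then have "g \<bullet> e = 1 \<or> g \<bullet> e = -1" using ab by auto
  then show ?thesis using gdec by (metis scaleR_minus1_left scaleR_one)
qed

end

theorem corollary4p8:
  fixes N :: "real^2 \<Rightarrow> real" and A :: "(real^2) set"
  assumes "is_norm N" and "smooth_norm N"
    and "finite A" and "even (card A)"
    and "FT N A \<inter> frontier (convex hull A) \<noteq> {}"
  shows "double_cluster N A \<or> pseudo_double_cluster N A"
proof -
  note nN = assms(1) and sm = assms(2) and fin = assms(3)
  obtain x where xFT: "x \<in> FT N A" and xF: "x \<in> frontier (convex hull A)" using assms(5) by blast
  obtain h where h: "h \<noteq> 0" "\<forall>a\<in>A. h \<bullet> a \<le> h \<bullet> x" using support_hull[OF fin xF] by blast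
  define e0 where "e0 = perp h"
  have e0: "e0 \<noteq> 0" "h \<bullet> e0 = 0" using h(1) perp_eq0 perp_inner by (auto simp: e0_def)
  have Ne0: "N e0 > 0" using Npos[OF nN e0(1)] .
  define e where "e = (1 / N e0) *\<^sub>R e0"
  have Ne: "N e = 1" using Ne0 by (simp add: e_def Nscale[OF nN])
  have he: "h \<bullet> e = 0" using e0 by (simp add: e_def)
  have e_ne: "e \<noteq> 0" using Ne N0[OF nN] by auto
  obtain psi where psi: "nf N e psi" using nf_exists[OF nN] by blast
  have psie: "psi \<bullet> e = 1" using psi Ne by (simp add: nf_def)
  have psi0: "psi \<noteq> 0" using psie by auto
  define z0 where "z0 = perp psi"
  have z0: "z0 \<noteq> 0" "psi \<bullet> z0 = 0" using psi0 perp_eq0 perp_inner by (auto simp: z0_def)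
  have hz0: "h \<bullet> z0 \<noteq> 0"
  proof
    assume "h \<bullet> z0 = 0"
    then obtain c where c: "z0 = c *\<^sub>R e" using ker_span[OF h(1) e_ne he] by blast
    then have "c = 0" using z0(2) psie by simp
    then show False using c z0(1) by simp
  qed
  define z where "z = (if h \<bullet> z0 > 0 then z0 else - z0)"
  have hz: "h \<bullet> z > 0" using hz0 by (auto simp: z_def)
  have psiz: "psi \<bullet> z = 0" using z0 by (simp add: z_def)
  define zeta where "zeta = (1 / (h \<bullet> z)) *\<^sub>R h"
  have zetae: "zeta \<bullet> e = 0" using he by (simp add: zeta_def)
  have zetaz: "zeta \<bullet> z = 1" using hz by (simp add: zeta_def)
  have dec: "u = (psi \<bullet> u) *\<^sub>R e + (zeta \<bullet> u) *\<^sub>R z" for u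
  proof -
    define d where "d = u - (psi \<bullet> u) *\<^sub>R e - (zeta \<bullet> u) *\<^sub>R z"
    have "h \<bullet> d = h \<bullet> u - (zeta \<bullet> u) * (h \<bullet> z)" using he by (simp add: d_def inner_diff_right)
    also have "\<dots> = 0" using hz by (simp add: zeta_def)
    finally obtain c where c: "d = c *\<^sub>R e" using ker_span[OF h(1) e_ne he] by blast
    have "psi \<bullet> d = 0" using psie psiz by (simp add: d_def inner_diff_right)
    then have "c = 0" using c psie by simp
    then show ?thesis using c by (simp add: d_def algebra_simps)
  qed
  interpret geo N e z psi zeta
    using nN sm Ne psi psiz zetae zetaz dec by unfold_locales auto
  define J where "J a = (SOME g. nf N (x - a) g)" for a
  have Jnf: "nf N (x - a) (J a)" for a unfolding J_def by (rule someI_ex, rule nf_exists[OF nN])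
  have zetau: "zeta \<bullet> (x - a) \<ge> 0" if "a \<in> A" for a
  proof -
    have "h \<bullet> (x - a) \<ge> 0" using h(2) that by (simp add: inner_diff_right)
    then show ?thesis using hz by (simp add: zeta_def)
  qed
  have JH: "unitH N z (J a)" if "a \<in> A - {x}" for a
  proof -
    have ne: "x - a \<noteq> 0" using that by auto
    have "J a \<bullet> z \<ge> 0" using unitH_of[OF ne Jnf zetau] that by auto
    then show ?thesis using ne Jnf[of a] unfolding unitH_def by blast
  qed
  have FTI: "(\<Sum>a\<in>A-{x}. J a \<bullet> v) + (if x \<in> A then N v else 0) \<ge> 0" for v
    using FT_ineq[OF nN sm fin xFT Jnf] .
  show ?thesis
  proof (cases "x \<in> A")
    case False
    then have AA: "A - {x} = A" by simp
    have S0: "(\<Sum>a\<in>A. J a \<bullet> v) = 0" for v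
    proof -
      have "(\<Sum>a\<in>A. J a \<bullet> v) \<ge> 0" using FTI[of v] False AA by simp
      moreover have "(\<Sum>a\<in>A. J a \<bullet> (-v)) \<ge> 0" using FTI[of "-v"] False AA by simp
      ultimately show ?thesis by (simp add: sum_negf)
    qed
    have JHA: "unitH N z (J a)" if "a \<in> A" for a using JH AA that by simp
    have nn: "\<forall>a\<in>A. 0 \<le> J a \<bullet> z" using JHA by (auto simp: unitH_def)
    have "\<forall>a\<in>A. J a \<bullet> z = 0" using sum_nonneg_eq_0_iff[OF fin, of "\<lambda>a. J a \<bullet> z"] nn S0[of z] by simp
    then have pm: "J a = psi \<or> J a = -psi" if "a \<in> A" for a using pm_psi[OF JHA] that by blast
    define U where "U = {a\<in>A. J a = psi}"
    define D where "D = {a\<in>A. J a = -psi}"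
    have AUD: "A = U \<union> D" using pm by (auto simp: U_def D_def)
    have pm0: "psi \<noteq> - psi"
    proof
      assume "psi = - psi"
      then have "psi \<bullet> e = - (psi \<bullet> e)" by (metis inner_minus_left)
      then show False using psie by simp
    qed
    have dj: "U \<inter> D = {}" using pm0 by (auto simp: U_def D_def)
    have fU: "finite U" "finite D" using fin by (auto simp: U_def D_def)
    have "(\<Sum>a\<in>A. J a \<bullet> e) = (\<Sum>a\<in>U. J a \<bullet> e) + (\<Sum>a\<in>D. J a \<bullet> e)"
      unfolding AUD by (rule sum.union_disjoint[OF fU dj])
    also have "\<dots> = real (card U) - real (card D)"
      by (simp add: U_def D_def psie)
    finally have "card U = card D" using S0[of e] by simp
    moreover have "\<forall>a\<in>U. psi \<bullet> (x - a) = N (x - a)" using Jnf by (auto simp: U_def nf_def)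
    moreover have "\<forall>b\<in>D. psi \<bullet> (x - b) = - N (x - b)"
    proof
      fix b assume "b \<in> D"
      then have "J b = - psi" by (simp add: D_def)
      moreover have "J b \<bullet> (x - b) = N (x - b)" using Jnf[of b] by (simp add: nf_def)
      ultimately show "psi \<bullet> (x - b) = - N (x - b)" by simp
    qed
    ultimately have "double_cluster N (U \<union> D)"
      using dc_lemma[OF nN fU dj _ _ psie Ne] psi by (auto simp: nf_def)
    then show ?thesis using AUD by simp
  next
    case True
    obtain k where k: "card A = 2 * k" using assms(4) by (auto elim: evenE)
    have "card A \<noteq> 0" using True fin by auto
    then have "card A \<ge> 1" by simp
    then have k1: "k \<ge> 1" using k by simp
    have cA': "card (A - {x}) = 2 * (k - 1) + 1" using True fin k k1 by simp
    have sumle: "(\<Sum>a\<in>A - {x}. J a \<bullet> w) \<le> N w" for w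
    proof -
      have "(\<Sum>a\<in>A-{x}. J a \<bullet> (-w)) + N (-w) \<ge> 0" using FTI[of "-w"] True by simp
      then show ?thesis by (simp add: sum_negf Nneg[OF nN])
    qed
    obtain p U D where P: "A - {x} = insert p (U \<union> D) \<and> p \<notin> U \<and> p \<notin> D \<and> U \<inter> D = {} \<and> card U = card D
           \<and> finite U \<and> finite D \<and> (\<forall>a\<in>U. J a = psi) \<and> (\<forall>a\<in>D. J a = -psi)"
      using central[OF _ cA' _ sumle] fin JH by blast
    have fU: "finite U" "finite D" and dj: "U \<inter> D = {}" and cUD: "card U = card D"
      and UJ: "\<forall>a\<in>U. J a = psi" and DJ: "\<forall>a\<in>D. J a = -psi" using P by simp_all
    have "\<forall>a\<in>U. psi \<bullet> (x - a) = N (x - a)" using Jnf UJ by (auto simp: nf_def)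
    moreover have "\<forall>b\<in>D. psi \<bullet> (x - b) = - N (x - b)"
    proof
      fix b assume "b \<in> D"
      then have "J b = - psi" using DJ by simp
      moreover have "J b \<bullet> (x - b) = N (x - b)" using Jnf[of b] by (simp add: nf_def)
      ultimately show "psi \<bullet> (x - b) = - N (x - b)" by simp
    qed
    ultimately have dcC: "double_cluster N (U \<union> D)"
      using dc_lemma[OF nN fU dj cUD _ psie Ne] psi by (auto simp: nf_def)
    have s0: "(\<Sum>c\<in>U \<union> D. J c) = 0"
    proof -
      have "(\<Sum>c\<in>U \<union> D. J c) = (\<Sum>c\<in>U. J c) + (\<Sum>c\<in>D. J c)" by (rule sum.union_disjoint[OF fU dj])
      also have "\<dots> = (\<Sum>c\<in>U. psi) + (\<Sum>c\<in>D. - psi)" using UJ DJ by simp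
      also have "\<dots> = (\<Sum>c\<in>U. psi) - (\<Sum>c\<in>D. psi)" by (simp add: sum_negf)
      also have "(\<Sum>c\<in>U. psi) = (\<Sum>c\<in>D. psi)" using cUD by simp
      finally show ?thesis by simp
    qed
    have ftC: "x \<in> FT N (U \<union> D)" using FT_suff[OF nN _ Jnf s0] fU by simp
    have "A = (U \<union> D) \<union> {x, p}" using P True by blast
    then have "pseudo_double_cluster N A" unfolding pseudo_double_cluster_def using dcC ftC by blast
    then show ?thesis by simp
  qed
qed


end
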